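(* Let $\sigma>0$, $0\le\delta<\min(1,\sigma)$ and $0<a\le1$. For every integer $t>\tau:=\big(\frac{2(\sigma-\delta)}{a}\big)^{\frac{1}{1-\delta}}$, $$\sum_{s=1}^{t-1}\Big[\frac{1}{s^\sigma}\prod_{k=s+1}^{t-1}\Big(1-\frac{a}{k^\delta}\Big)\Big]\le A(a,\sigma,\delta)\,t^{-(\sigma-\delta)},$$ where $A(a,\sigma,\delta)=2^\sigma\max\{1+\frac2a,\,1+\frac{1}{\sigma-1}(\frac{2(\sigma-\delta)}{a})^{\frac{\sigma-\delta}{1-\delta}}\}$ if $\sigma>1$; $A(a,\sigma,\delta)=2^\sigma\max\{1+\frac2a,\,1+\frac2a\ln(\frac{2(1-\delta)}{a})\}$ if $\sigma=1$; $A(a,\sigma,\delta)=2^\sigma\max\{1+\frac2a,\,1+\frac{2(\sigma-\delta)}{a(1-\sigma)}\}$ if $0<\sigma<1$. Moreover, for $\delta=1$ and $a-\sigma+1\neq0$, $$\sum_{s=1}^{t-1}\Big[\frac{1}{s^\sigma}\prod_{k=s+1}^{t-1}\Big(1-\frac{a}{k}\Big)\Big]\le A(a,\sigma,1)\,t^{-\min(\sigma-1,a)},$$ where $A(a,\sigma,1)=2^\sigma\big(1+\frac{1}{|a-\sigma+1|}\big)$.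
   Context: Empty products equal $1$. In the case $\delta=1$ the same $a\in(0,1]$ and $\sigma>0$ are considered and $t$ ranges over positive integers. *)

theory Defs
  imports Complex_Main
begin

definition weighted_prod_sum :: "real \<Rightarrow> real \<Rightarrow> real \<Rightarrow> nat \<Rightarrow> real" where
  "weighted_prod_sum a \<sigma> \<delta> t =
     (\<Sum>s\<in>{1..<t}. (1 / (real s powr \<sigma>)) *
        (\<Prod>k\<in>{s+1..<t}. (1 - a / (real k powr \<delta>))))"

definition const_A :: "real \<Rightarrow> real \<Rightarrow> real \<Rightarrow> real" where
  "const_A a \<sigma> \<delta> =
     (if \<sigma> > 1 then
        2 powr \<sigma> * max (1 + 2 / a)
          (1 + 1 / (\<sigma> - 1) * (2 * (\<sigma> - \<delta>) / a) powr ((\<sigma> - \<delta>) / (1 - \<delta>)))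
      else if \<sigma> = 1 then
        2 powr \<sigma> * max (1 + 2 / a) (1 + 2 / a * ln (2 * (1 - \<delta>) / a))
      else
        2 powr \<sigma> * max (1 + 2 / a) (1 + 2 * (\<sigma> - \<delta>) / (a * (1 - \<sigma>))))"

definition const_A1 :: "real \<Rightarrow> real \<Rightarrow> real" where
  "const_A1 a \<sigma> = 2 powr \<sigma> * (1 + 1 / \<bar>a - \<sigma> + 1\<bar>)"

end

theory Submission
  imports Defs "HOL-Analysis.Convex" "HOL-Analysis.Harmonic_Numbers"
begin


lemma xpow: fixes x q :: real assumes "x > 0" shows "x * x powr (q - 1) = x powr q"
proof -
  have "x powr q = x powr (1 + (q-1))" by simp
  also have "\<dots> = x powr 1 * x powr (q-1)" by (rule powr_add)
  also have "\<dots> = x * x powr (q-1)" using assms by simp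
  finally show ?thesis by simp
qed

lemma tan_concave:
  fixes x y q :: real
  assumes "0 \<le> q" "q \<le> 1" "x > 0" "y > 0"
  shows "y powr q \<le> x powr q + q * x powr (q - 1) * (y - x)"
proof -
  have "y powr q * x powr (1 - q) \<le> q * y + (1 - q) * x"
    by (rule Youngs_inequality_0) (use assms in auto)
  hence "y powr q * x powr (1 - q) * x powr (q - 1) \<le> (q * y + (1 - q) * x) * x powr (q - 1)"
    by (rule mult_right_mono) simp
  moreover have "y powr q * x powr (1 - q) * x powr (q - 1) = y powr q"
  proof -
    have "x powr (1 - q) * x powr (q - 1) = x powr ((1-q) + (q-1))" by (rule powr_add[symmetric])
    also have "\<dots> = 1" using assms by simp
    finally show ?thesis by (simp add: mult.assoc)
  qed
  moreover have "(q * y + (1 - q) * x) * x powr (q - 1) = x powr q + q * x powr (q - 1) * (y - x)"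
    using xpow[OF assms(3), of q] by (simp add: algebra_simps)
  ultimately show ?thesis by simp
qed


lemma tan_convex1:
  fixes x y q :: real
  assumes "1 \<le> q" "x > 0" "y > 0"
  shows "x powr q + q * x powr (q - 1) * (y - x) \<le> y powr q"
proof -
  have h0: "(y powr q) powr (1/q) * (x powr q) powr (1 - 1/q) \<le> (1/q) * y powr q + (1 - 1/q) * x powr q"
    by (rule Youngs_inequality_0) (use assms in auto)
  have e1: "(y powr q) powr (1/q) = y" using assms by (simp add: powr_powr)
  have "q * (1 - 1/q) = q - 1" using assms by (simp add: field_simps)
  hence e2: "(x powr q) powr (1 - 1/q) = x powr (q - 1)" by (simp add: powr_powr)
  from h0 e1 e2 have h: "y * x powr (q - 1) \<le> (1/q) * y powr q + (1 - 1/q) * x powr q" by simp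
  have "q * (y * x powr (q - 1)) \<le> q * ((1/q) * y powr q + (1 - 1/q) * x powr q)"
    using h assms by (intro mult_left_mono) auto
  also have "\<dots> = y powr q + (q - 1) * x powr q" using assms by (simp add: algebra_simps)
  finally show ?thesis using xpow[OF assms(2), of q] by (simp add: algebra_simps)
qed

lemma tan_convex0:
  fixes x y q :: real
  assumes "q \<le> 0" "x > 0" "y > 0"
  shows "x powr q + q * x powr (q - 1) * (y - x) \<le> y powr q"
proof -
  define r where "r = - q"
  have r: "r \<ge> 0" using assms r_def by simp
  have h0: "(y powr q) powr (1/(1+r)) * (x powr (q - 1) * y) powr (r/(1+r))
     \<le> (1/(1+r)) * y powr q + (r/(1+r)) * (x powr (q - 1) * y)"
  proof (rule Youngs_inequality_0)
    show "1 / (1 + r) + r / (1 + r) = 1" using r by (simp add: field_simps)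
  qed (use assms r in auto)
  have e1: "(y powr q) powr (1/(1+r)) = y powr (q/(1+r))" using assms by (simp add: powr_powr)
  have e2: "(x powr (q - 1) * y) powr (r/(1+r)) = x powr ((q-1)*(r/(1+r))) * y powr (r/(1+r))"
    using assms by (simp add: powr_mult powr_powr)
  have e3: "(q-1)*(r/(1+r)) = q" using r r_def by (simp add: field_simps)
  have e4: "y powr (q/(1+r)) * y powr (r/(1+r)) = 1"
  proof -
    have "y powr (q/(1+r)) * y powr (r/(1+r)) = y powr (q/(1+r) + r/(1+r))" by (rule powr_add[symmetric])
    also have "q/(1+r) + r/(1+r) = 0" using r_def by (simp add: field_simps)
    finally show ?thesis using assms by simp
  qed
  have "(y powr q) powr (1/(1+r)) * (x powr (q - 1) * y) powr (r/(1+r)) = x powr q"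
    unfolding e1 e2 e3 using e4 by (simp add: algebra_simps)
  with h0 have h: "x powr q \<le> (1/(1+r)) * y powr q + (r/(1+r)) * (x powr (q - 1) * y)" by simp
  have "(1+r) * x powr q \<le> (1+r) * ((1/(1+r)) * y powr q + (r/(1+r)) * (x powr (q - 1) * y))"
    using h r by (intro mult_left_mono) auto
  also have "\<dots> = y powr q + r * (x powr (q - 1) * y)"
  proof -
    have rne: "1 + r \<noteq> 0" using r by simp
    show ?thesis by (simp add: distrib_left rne)
  qed
  finally show ?thesis using xpow[OF assms(2), of q] r_def by (simp add: algebra_simps)
qed


lemma wps_Suc:
  assumes "t \<ge> 1"
  shows "weighted_prod_sum a \<sigma> \<delta> (Suc t) =
         (1 - a / real t powr \<delta>) * weighted_prod_sum a \<sigma> \<delta> t + 1 / real t powr \<sigma>"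
proof -
  have I: "{1..<Suc t} = insert t {1..<t}" using assms by auto
  have J: "\<And>s. s \<in> {1..<t} \<Longrightarrow> {s+1..<Suc t} = insert t {s+1..<t}" by auto
  have "weighted_prod_sum a \<sigma> \<delta> (Suc t) =
     1 / real t powr \<sigma> + (\<Sum>s\<in>{1..<t}. (1 / (real s powr \<sigma>)) *
        (\<Prod>k\<in>{s+1..<Suc t}. (1 - a / (real k powr \<delta>))))"
    unfolding weighted_prod_sum_def I by (simp add: sum.insert)
  also have "(\<Sum>s\<in>{1..<t}. (1 / (real s powr \<sigma>)) *
        (\<Prod>k\<in>{s+1..<Suc t}. (1 - a / (real k powr \<delta>)))) =
      (\<Sum>s\<in>{1..<t}. (1 - a / real t powr \<delta>) * ((1 / (real s powr \<sigma>)) *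
        (\<Prod>k\<in>{s+1..<t}. (1 - a / (real k powr \<delta>)))))"
    by (rule sum.cong) (auto simp: J prod.insert)
  finally show ?thesis unfolding weighted_prod_sum_def by (simp add: sum_distrib_left)
qed



lemma prod_bound1:
  fixes a :: real
  assumes a: "0 < a" "a \<le> 1" and s: "1 \<le> s"
  shows "(\<Prod>k\<in>{s+1..<s+1+m}. (1 - a / real k powr 1)) \<le> real (s+1) powr a * real (s+1+m) powr (-a)"
proof (induction m)
  case 0
  have "real (s+1) powr a * real (s+1) powr (-a) = 1"
    by (simp flip: powr_add)
  then show ?case by simp
next
  case (Suc m)
  define t where "t = s+1+m"
  have t2: "real t \<ge> 2" using s t_def by simp
  have eq: "{s+1..<s+1+Suc m} = insert t {s+1..<t}" using t_def by auto
  have f0: "0 \<le> 1 - a / real t" using a t2 by (simp add: field_simps)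
  have "(\<Prod>k\<in>{s+1..<s+1+Suc m}. (1 - a / real k powr 1)) =
        (1 - a / real t) * (\<Prod>k\<in>{s+1..<t}. (1 - a / real k powr 1))"
    unfolding eq using t2 by (simp add: prod.insert)
  also have "\<dots> \<le> (1 - a / real t) * (real (s+1) powr a * real t powr (-a))"
    using Suc.IH f0 t_def by (intro mult_left_mono) auto
  also have "\<dots> \<le> real (s+1) powr a * real (Suc t) powr (-a)"
  proof -
    have tc: "real t powr (-a) + (-a) * real t powr (-a - 1) * (real (Suc t) - real t) \<le> real (Suc t) powr (-a)"
      using tan_convex0[of "-a" "real t" "real (Suc t)"] a t2 by simp
    have "real t powr (-a - 1) = real t powr (-a) / real t"
      using t2 by (simp add: powr_diff)
    hence "(1 - a / real t) * real t powr (-a) \<le> real (Suc t) powr (-a)"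
      using tc by (simp add: algebra_simps)
    hence "real (s+1) powr a * ((1 - a / real t) * real t powr (-a)) \<le> real (s+1) powr a * real (Suc t) powr (-a)"
      by (intro mult_left_mono) auto
    thus ?thesis by (simp add: algebra_simps)
  qed
  finally show ?case using t_def by simp
qed

lemma prod_bound:
  fixes a :: real
  assumes a: "0 < a" "a \<le> 1" and s: "1 \<le> s" "s < t"
  shows "(\<Prod>k\<in>{s+1..<t}. (1 - a / real k powr 1)) \<le> real (s+1) powr a * real t powr (-a)"
  using prod_bound1[OF a s(1), of "t - (s+1)"] s by simp

lemma G_lt:
  fixes e :: real
  assumes e: "e < -1" and t: "1 \<le> t"
  shows "(-(e+1)) * (\<Sum>s\<in>{1..<t}. real (s+1) powr e) \<le> 1 - real t powr (e+1)"
  using t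
proof (induction t rule: nat_induct_at_least)
  case base
  then show ?case by simp
next
  case (Suc n)
  have I: "{1..<Suc n} = insert n {1..<n}" using Suc by auto
  have tc: "real (Suc n) powr (e+1) + (e+1) * real (Suc n) powr (e + 1 - 1) * (real n - real (Suc n)) \<le> real n powr (e+1)"
    using tan_convex0[of "e+1" "real (Suc n)" "real n"] e Suc by simp
  hence "(-(e+1)) * real (Suc n) powr e \<le> real n powr (e+1) - real (Suc n) powr (e+1)"
    by (simp add: algebra_simps)
  then show ?case using Suc.IH unfolding I by (simp add: sum.insert algebra_simps)
qed

lemma G_mid:
  fixes e :: real
  assumes e: "-1 < e" "e \<le> 0" and t: "1 \<le> t"
  shows "(e+1) * (\<Sum>s\<in>{1..<t}. real (s+1) powr e) \<le> real t powr (e+1) - 1"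
  using t
proof (induction t rule: nat_induct_at_least)
  case base
  then show ?case by simp
next
  case (Suc n)
  have I: "{1..<Suc n} = insert n {1..<n}" using Suc by auto
  have tc: "real n powr (e+1) \<le> real (Suc n) powr (e+1) + (e+1) * real (Suc n) powr (e + 1 - 1) * (real n - real (Suc n))"
    using tan_concave[of "e+1" "real (Suc n)" "real n"] e Suc by simp
  hence "(e+1) * real (Suc n) powr e \<le> real (Suc n) powr (e+1) - real n powr (e+1)"
    by (simp add: algebra_simps)
  then show ?case using Suc.IH unfolding I by (simp add: sum.insert algebra_simps)
qed

lemma G_pos:
  fixes e :: real
  assumes e: "0 \<le> e" and t: "1 \<le> t"
  shows "(\<Sum>s\<in>{1..<t}. real (s+1) powr e) \<le> real t powr (e+1)"
  using t
proof (induction t rule: nat_induct_at_least)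
  case base
  then show ?case by simp
next
  case (Suc n)
  have I: "{1..<Suc n} = insert n {1..<n}" using Suc by auto
  have "real n powr (e+1) = real n * real n powr e" using Suc xpow[of "real n" "e+1"] by simp
  also have "\<dots> \<le> real n * real (Suc n) powr e" using e by (intro mult_left_mono powr_mono2) auto
  finally have "real n powr (e+1) + real (Suc n) powr e \<le> real (Suc n) * real (Suc n) powr e"
    by (simp add: algebra_simps)
  also have "\<dots> = real (Suc n) powr (e+1)" using xpow[of "real (Suc n)" "e+1"] by simp
  finally show ?case using Suc.IH unfolding I by (simp add: sum.insert)
qed



lemma inv_s_bound:
  fixes \<sigma> :: real
  assumes "\<sigma> > 0" "1 \<le> s"
  shows "1 / real s powr \<sigma> \<le> 2 powr \<sigma> * real (s+1) powr (-\<sigma>)"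
proof -
  have "real (s+1) powr \<sigma> \<le> (2 * real s) powr \<sigma>"
    using assms by (intro powr_mono2) auto
  also have "\<dots> = 2 powr \<sigma> * real s powr \<sigma>" by (simp add: powr_mult)
  finally have h: "real (s+1) powr \<sigma> \<le> 2 powr \<sigma> * real s powr \<sigma>" .
  have p1: "real s powr \<sigma> > 0" "real (s+1) powr \<sigma> > 0" using assms by auto
  have "1 / real s powr \<sigma> \<le> 2 powr \<sigma> / real (s+1) powr \<sigma>"
    using h p1 by (simp add: field_simps)
  thus ?thesis by (simp add: powr_minus divide_inverse)
qed

lemma part2:
  fixes a \<sigma> :: real
  assumes "\<sigma> > 0" and a: "0 < a" "a \<le> 1" and ne: "a - \<sigma> + 1 \<noteq> 0" and t: "t \<ge> 1"
  shows "weighted_prod_sum a \<sigma> 1 t \<le> const_A1 a \<sigma> * real t powr (- min (\<sigma> - 1) a)"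
proof -
  define e where "e = a - \<sigma>"
  define G where "G = (\<Sum>s\<in>{1..<t}. real (s+1) powr e)"
  have tpos: "real t > 0" using t by simp
  have "weighted_prod_sum a \<sigma> 1 t \<le> (\<Sum>s\<in>{1..<t}. 2 powr \<sigma> * real t powr (-a) * real (s+1) powr e)"
    unfolding weighted_prod_sum_def
  proof (rule sum_mono)
    fix s assume s: "s \<in> {1..<t}"
    have "1 / real s powr \<sigma> * (\<Prod>k\<in>{s+1..<t}. (1 - a / real k powr 1))
        \<le> 1 / real s powr \<sigma> * (real (s+1) powr a * real t powr (-a))"
      using prod_bound[OF a, of s t] s by (intro mult_left_mono) auto
    also have "\<dots> \<le> (2 powr \<sigma> * real (s+1) powr (-\<sigma>)) * (real (s+1) powr a * real t powr (-a))"
      using inv_s_bound[OF assms(1), of s] s by (intro mult_right_mono) auto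
    also have "\<dots> = 2 powr \<sigma> * real t powr (-a) * (real (s+1) powr (-\<sigma>) * real (s+1) powr a)"
      by (simp add: algebra_simps)
    also have "real (s+1) powr (-\<sigma>) * real (s+1) powr a = real (s+1) powr e"
      unfolding e_def by (simp flip: powr_add)
    finally show "1 / real s powr \<sigma> * (\<Prod>k\<in>{s+1..<t}. (1 - a / real k powr 1))
        \<le> 2 powr \<sigma> * real t powr (-a) * real (s+1) powr e" .
  qed
  also have "\<dots> = 2 powr \<sigma> * real t powr (-a) * G" unfolding G_def by (simp add: sum_distrib_left)
  finally have main: "weighted_prod_sum a \<sigma> 1 t \<le> 2 powr \<sigma> * real t powr (-a) * G" .
  have c0: "0 < 2 powr \<sigma> * real t powr (-a)" using tpos by simp
  show ?thesis
  proof (cases "e < -1")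
    case True
    have G1: "(-(e+1)) * G \<le> 1" using G_lt[OF True t] unfolding G_def
      by (smt (verit) powr_ge_zero)
    have ab: "\<bar>a - \<sigma> + 1\<bar> = -(e+1)" using True e_def by simp
    have "G \<le> 1 / \<bar>a - \<sigma> + 1\<bar>" using G1 True unfolding ab by (simp add: field_simps)
    also have "\<dots> \<le> 1 + 1 / \<bar>a - \<sigma> + 1\<bar>" by simp
    finally have "2 powr \<sigma> * real t powr (-a) * G \<le> 2 powr \<sigma> * real t powr (-a) * (1 + 1 / \<bar>a - \<sigma> + 1\<bar>)"
      using c0 by (intro mult_left_mono) auto
    moreover have "min (\<sigma> - 1) a = a" using True e_def by simp
    ultimately show ?thesis using main unfolding const_A1_def by (simp add: algebra_simps)
  next
    case False
    hence e1: "e > -1" using ne e_def by auto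
    have ab: "\<bar>a - \<sigma> + 1\<bar> = e+1" using e1 e_def by simp
    have "G \<le> (1 + 1 / (e+1)) * real t powr (e+1)"
    proof (cases "e \<le> 0")
      case True
      have "(e+1) * G \<le> real t powr (e+1)" using G_mid[OF e1 True t] unfolding G_def by simp
      hence "G \<le> real t powr (e+1) / (e+1)" using e1 by (simp add: field_simps)
      also have "\<dots> \<le> (1 + 1 / (e+1)) * real t powr (e+1)" by (simp add: field_simps)
      finally show ?thesis .
    next
      case False
      have "G \<le> real t powr (e+1)" using G_pos[of e t] False t unfolding G_def by simp
      also have "\<dots> \<le> (1 + 1 / (e+1)) * real t powr (e+1)" using False
        by (simp add: field_simps)
      finally show ?thesis .
    qed
    hence "2 powr \<sigma> * real t powr (-a) * G \<le> 2 powr \<sigma> * real t powr (-a) * ((1 + 1 / (e+1)) * real t powr (e+1))"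
      using c0 by (intro mult_left_mono) auto
    also have "\<dots> = 2 powr \<sigma> * (1 + 1 / (e+1)) * (real t powr (-a) * real t powr (e+1))"
      by (simp add: algebra_simps)
    also have "real t powr (-a) * real t powr (e+1) = real t powr (- (\<sigma> - 1))"
      unfolding e_def by (simp flip: powr_add)
    finally have X: "2 powr \<sigma> * real t powr (-a) * G \<le> 2 powr \<sigma> * (1 + 1 / (e+1)) * real t powr (- (\<sigma> - 1))" .
    have "min (\<sigma> - 1) a = \<sigma> - 1" using e1 e_def by simp
    moreover have "weighted_prod_sum a \<sigma> 1 t \<le> 2 powr \<sigma> * (1 + 1 / (e+1)) * real t powr (- (\<sigma> - 1))"
      using main X by (rule order_trans)
    ultimately show ?thesis unfolding const_A1_def ab by simp
  qed
qed



lemma H_gt1: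
  fixes \<sigma> :: real
  assumes s: "\<sigma> > 1" and n: "1 \<le> n"
  shows "(\<sigma> - 1) * (\<Sum>s\<in>{1..<Suc n}. 1 / real s powr \<sigma>) \<le> \<sigma> - real n powr (1 - \<sigma>)"
  using n
proof (induction n rule: nat_induct_at_least)
  case base
  then show ?case by simp
next
  case (Suc n)
  have I: "{1..<Suc (Suc n)} = insert (Suc n) {1..<Suc n}" by auto
  have tc: "real (Suc n) powr (1-\<sigma>) + (1-\<sigma>) * real (Suc n) powr (1 - \<sigma> - 1) * (real n - real (Suc n)) \<le> real n powr (1-\<sigma>)"
    using tan_convex0[of "1-\<sigma>" "real (Suc n)" "real n"] s Suc by simp
  have e: "real (Suc n) powr (1 - \<sigma> - 1) = 1 / real (Suc n) powr \<sigma>"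
    by (simp add: powr_minus divide_inverse)
  have "(\<sigma> - 1) * (1 / real (Suc n) powr \<sigma>) \<le> real n powr (1-\<sigma>) - real (Suc n) powr (1-\<sigma>)"
    using tc unfolding e by (simp add: algebra_simps)
  then show ?case using Suc.IH unfolding I by (simp add: sum.insert algebra_simps)
qed

lemma H_lt1:
  fixes \<sigma> :: real
  assumes s: "0 < \<sigma>" "\<sigma> < 1" and n: "1 \<le> n"
  shows "(1 - \<sigma>) * (\<Sum>s\<in>{1..<Suc n}. 1 / real s powr \<sigma>) \<le> real n powr (1 - \<sigma>)"
  using n
proof (induction n rule: nat_induct_at_least)
  case base
  then show ?case using s by simp
next
  case (Suc n)
  have I: "{1..<Suc (Suc n)} = insert (Suc n) {1..<Suc n}" by auto
  have tc: "real n powr (1-\<sigma>) \<le> real (Suc n) powr (1-\<sigma>) + (1-\<sigma>) * real (Suc n) powr (1 - \<sigma> - 1) * (real n - real (Suc n))"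
    using tan_concave[of "1-\<sigma>" "real (Suc n)" "real n"] s Suc by simp
  have e: "real (Suc n) powr (1 - \<sigma> - 1) = 1 / real (Suc n) powr \<sigma>"
    by (simp add: powr_minus divide_inverse)
  have m: "(1-\<sigma>) * (1 / real (Suc n) powr \<sigma>) * (real n - real (Suc n)) = - ((1 - \<sigma>) * (1 / real (Suc n) powr \<sigma>))"
    by (simp add: algebra_simps minus_divide_left)
  have "(1 - \<sigma>) * (1 / real (Suc n) powr \<sigma>) \<le> real (Suc n) powr (1-\<sigma>) - real n powr (1-\<sigma>)"
    using tc unfolding e m by linarith
  then show ?case using Suc.IH unfolding I by (simp add: sum.insert algebra_simps)
qed

lemma H_eq1:
  assumes n: "1 \<le> n"
  shows "(\<Sum>s\<in>{1..<Suc n}. 1 / real s powr (1::real)) \<le> 1 + ln (real n)"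
  using n
proof (induction n rule: nat_induct_at_least)
  case base
  then show ?case by simp
next
  case (Suc n)
  have I: "{1..<Suc (Suc n)} = insert (Suc n) {1..<Suc n}" by auto
  have "ln (real n / real (Suc n)) \<le> real n / real (Suc n) - 1"
    using Suc by (intro ln_le_minus_one) simp
  moreover have "ln (real n / real (Suc n)) = ln (real n) - ln (real (Suc n))"
    using Suc by (intro ln_divide_pos) auto
  moreover have "real n / real (Suc n) - 1 = - (1 / real (Suc n))" by (simp add: field_simps)
  ultimately have "1 / real (Suc n) \<le> ln (real (Suc n)) - ln (real n)" by simp
  then show ?case using Suc.IH unfolding I by (simp add: sum.insert algebra_simps)
qed

lemma sig_exp_half:
  fixes \<sigma> :: real
  assumes "\<sigma> > 0"
  shows "\<sigma> * exp (1/2) \<le> 2 powr \<sigma>"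
proof -
  have e1: "exp (1/2::real) \<ge> 3/2" using exp_ge_add_one_self[of "1/2::real"] by simp
  have "exp (1/2) * exp (1/2::real) = exp 1" by (simp flip: exp_add)
  hence "exp (1/2::real) = exp 1 / exp (1/2)" by (simp add: field_simps)
  also have "\<dots> \<le> exp 1 * (2/3)" using e1 by (simp add: field_simps)
  also have "\<dots> \<le> exp 1 * ln 2" using ln2_ge_two_thirds by simp
  finally have h: "exp (1/2::real) \<le> exp 1 * ln 2" .
  have "\<sigma> * ln 2 \<le> exp (\<sigma> * ln 2 - 1)" using exp_ge_add_one_self[of "\<sigma> * ln 2 - 1"] by simp
  also have "\<dots> = 2 powr \<sigma> / exp 1" by (simp add: powr_def exp_diff mult.commute)
  finally have "exp 1 * (\<sigma> * ln 2) \<le> 2 powr \<sigma>" by (simp add: field_simps)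
  moreover have "\<sigma> * exp (1/2) \<le> \<sigma> * (exp 1 * ln 2)" using h assms by (intro mult_left_mono) auto
  ultimately show ?thesis by (simp add: algebra_simps)
qed

lemma one_plus_pow:
  fixes p y :: real
  assumes "0 < p" "0 \<le> y"
  shows "(1 + y) powr p \<le> exp (p * y)"
proof -
  have "(1 + y) powr p = exp (p * ln (1 + y))" using assms by (simp add: powr_def mult.commute)
  also have "\<dots> \<le> exp (p * y)" using ln_add_one_self_le_self[OF assms(2)] assms by simp
  finally show ?thesis .
qed



lemma tau_pow:
  fixes a \<sigma> \<delta> :: real
  assumes "0 < a" "\<delta> < 1" "\<delta> < \<sigma>"
  shows "((2 * (\<sigma> - \<delta>) / a) powr (1 / (1 - \<delta>))) powr (1 - \<delta>) = 2 * (\<sigma> - \<delta>) / a"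
  using assms by (simp add: powr_powr)

lemma step1:
  fixes a \<sigma> \<delta> C :: real
  assumes a: "0 < a" "a \<le> 1" and d: "0 \<le> \<delta>" "\<delta> < 1" "\<delta> < \<sigma>"
    and C: "a * C \<ge> 2"
    and n: "1 \<le> n" "real n > (2 * (\<sigma> - \<delta>) / a) powr (1 / (1 - \<delta>))"
    and IH: "weighted_prod_sum a \<sigma> \<delta> n \<le> C * real n powr (- (\<sigma> - \<delta>))"
  shows "weighted_prod_sum a \<sigma> \<delta> (Suc n) \<le> C * real (Suc n) powr (- (\<sigma> - \<delta>))"
proof -
  define p where "p = \<sigma> - \<delta>"
  define x where "x = real n"
  have p: "p > 0" using d p_def by simp
  have x1: "x \<ge> 1" using n x_def by simp
  have Cpos: "C > 0" using C a by (metis mult_le_0_iff not_less not_numeral_le_zero order.trans less_le_not_le)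
  have xd: "x powr \<delta> \<ge> 1" using x1 d by (simp add: ge_one_powr_ge_zero)
  have f0: "0 \<le> 1 - a / x powr \<delta>" 
  proof -
    have "x powr \<delta> > 0" using x1 by simp
    hence "a / x powr \<delta> \<le> 1" using xd a by (simp add: pos_divide_le_eq del: divide_le_eq_1)
    thus ?thesis by simp
  qed
  have "x powr (1 - \<delta>) > ((2 * p / a) powr (1 / (1 - \<delta>))) powr (1 - \<delta>)"
    using n d a p unfolding x_def p_def by (intro powr_less_mono2) auto
  hence xbig: "x powr (1 - \<delta>) > 2 * p / a" using tau_pow[of a \<delta> \<sigma>] a d unfolding p_def by simp
  define u where "u = x powr (- \<sigma>)"
  define w where "w = x powr (- p)"
  define v where "v = x powr (- p - 1)"
  have u0: "u > 0" using x1 u_def by simp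
  have uw: "w / x powr \<delta> = u" unfolding u_def w_def p_def using x1
    by (simp add: powr_diff[symmetric])
  have ux: "1 / x powr \<sigma> = u" unfolding u_def using x1 by (simp add: powr_minus divide_inverse)
  have vu: "v = u / x powr (1 - \<delta>)"
  proof -
    have "- p - 1 = - \<sigma> - (1 - \<delta>)" unfolding p_def by simp
    thus ?thesis unfolding u_def v_def using x1 by (simp only: powr_diff)
  qed
  have "p * v \<le> (a/2) * u"
  proof -
    have "p * v = p * u / x powr (1 - \<delta>)" using vu by simp
    also have "\<dots> \<le> p * u / (2 * p / a)"
      using xbig p u0 a x1 by (intro divide_left_mono) (auto intro: mult_pos_pos)
    also have "\<dots> = (a/2) * u" using p a by (simp add: field_simps)
    finally show ?thesis .
  qed
  hence pv: "C * (p * v) \<le> C * ((a/2) * u)" using Cpos by (intro mult_left_mono) auto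
  have tc: "w + (-p) * v * 1 \<le> real (Suc n) powr (-p)"
    using tan_convex0[of "-p" x "real (Suc n)"] p x1 unfolding w_def v_def x_def by simp
  have "weighted_prod_sum a \<sigma> \<delta> (Suc n) = (1 - a / x powr \<delta>) * weighted_prod_sum a \<sigma> \<delta> n + 1 / x powr \<sigma>"
    using wps_Suc[OF n(1)] unfolding x_def by simp
  also have "\<dots> \<le> (1 - a / x powr \<delta>) * (C * w) + u"
    using IH f0 ux unfolding w_def x_def p_def by (simp add: mult_left_mono)
  also have "(1 - a / x powr \<delta>) * (C * w) = C * w - a * C * (w / x powr \<delta>)" by (simp add: algebra_simps)
  also have "\<dots> = C * w - a * C * u" using uw by simp
  finally have h: "weighted_prod_sum a \<sigma> \<delta> (Suc n) \<le> C * w - a * C * u + u" .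
  have "u * (a * C) \<ge> u * 2" using C u0 by (intro mult_left_mono) auto
  hence "C * w - a * C * u + u \<le> C * (w - p * v)" using pv by (simp add: algebra_simps)
  also have "\<dots> \<le> C * real (Suc n) powr (-p)" using tc Cpos by (intro mult_left_mono) auto
  finally show ?thesis using h unfolding p_def by simp
qed



lemma S_le_H:
  fixes a \<sigma> \<delta> :: real
  assumes a: "0 < a" "a \<le> 1" and d: "0 \<le> \<delta>"
  shows "weighted_prod_sum a \<sigma> \<delta> (Suc n) \<le> (\<Sum>s\<in>{1..<Suc n}. 1 / real s powr \<sigma>)"
  unfolding weighted_prod_sum_def
proof (rule sum_mono)
  fix s assume s: "s \<in> {1..<Suc n}"
  have P1: "(\<Prod>k\<in>{s+1..<Suc n}. (1 - a / (real k powr \<delta>))) \<le> 1"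
  proof (rule prod_le_1)
    fix k assume k: "k \<in> {s+1..<Suc n}"
    have k1: "real k \<ge> 1" using k s by simp
    have kp: "real k powr \<delta> \<ge> 1" using k1 d by (simp add: ge_one_powr_ge_zero)
    have kp0: "real k powr \<delta> > 0" using k1 by simp
    have "a / real k powr \<delta> \<le> 1" using kp a kp0 by (simp add: pos_divide_le_eq del: divide_le_eq_1)
    moreover have "a / real k powr \<delta> \<ge> 0" using a kp0 by simp
    ultimately show "0 \<le> 1 - a / real k powr \<delta> \<and> 1 - a / real k powr \<delta> \<le> 1" by simp
  qed
  have N0: "1 / real s powr \<sigma> \<ge> 0" by simp
  show "1 / real s powr \<sigma> * (\<Prod>k\<in>{s+1..<Suc n}. (1 - a / (real k powr \<delta>))) \<le> 1 / real s powr \<sigma>"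
    by (rule mult_left_le[OF P1 N0])
qed

lemma Hbound:
  fixes a \<sigma> \<delta> :: real
  assumes s: "\<sigma> > 0" and a: "0 < a" "a \<le> 1" and d: "0 \<le> \<delta>" "\<delta> < 1" "\<delta> < \<sigma>"
    and n: "1 \<le> n" "real n \<le> (2 * (\<sigma> - \<delta>) / a) powr (1 / (1 - \<delta>))"
  shows "(\<Sum>s\<in>{1..<Suc n}. 1 / real s powr \<sigma>) * real (Suc n) powr (\<sigma> - \<delta>) \<le> const_A a \<sigma> \<delta>"
proof -
  define p where "p = \<sigma> - \<delta>"
  define \<tau> where "\<tau> = (2 * p / a) powr (1 / (1 - \<delta>))"
  define H where "H = (\<Sum>s\<in>{1..<Suc n}. 1 / real s powr \<sigma>)"
  have p: "p > 0" using d p_def by simp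
  have H0: "H \<ge> 0" unfolding H_def by (intro sum_nonneg) simp
  have nt: "real n \<le> \<tau>" using n unfolding \<tau>_def p_def by simp
  have t1: "\<tau> \<ge> 1" using nt n by simp
  have tp: "\<tau> powr (1 - \<delta>) = 2 * p / a" unfolding \<tau>_def p_def using tau_pow[of a \<delta> \<sigma>] a d by simp
  have ntp: "real n powr (1 - \<delta>) \<le> 2 * p / a"
    using nt n d unfolding tp[symmetric] by (intro powr_mono2) auto
  show ?thesis
  proof (cases "\<sigma> < 1")
    case True
    have hH: "H \<le> real n powr (1 - \<sigma>) / (1 - \<sigma>)"
      using H_lt1[OF s True n(1)] True unfolding H_def by (simp add: pos_le_divide_eq mult.commute)
    have "real (Suc n) powr p \<le> (2 * real n) powr p" using p n by (intro powr_mono2) auto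
    also have "\<dots> = 2 powr p * real n powr p" by (simp add: powr_mult)
    finally have hN: "real (Suc n) powr p \<le> 2 powr p * real n powr p" .
    have "H * real (Suc n) powr p \<le> (real n powr (1 - \<sigma>) / (1 - \<sigma>)) * (2 powr p * real n powr p)"
      using hH hN H0 by (intro mult_mono) auto
    also have "\<dots> = 2 powr p * (real n powr (1 - \<sigma>) * real n powr p) / (1 - \<sigma>)" by (simp add: algebra_simps)
    also have "real n powr (1 - \<sigma>) * real n powr p = real n powr (1 - \<delta>)"
      unfolding p_def by (simp flip: powr_add)
    also have "2 powr p * real n powr (1 - \<delta>) / (1 - \<sigma>) \<le> 2 powr p * (2 * p / a) / (1 - \<sigma>)"
      using ntp True by (intro divide_right_mono mult_left_mono) auto
    also have "\<dots> \<le> 2 powr \<sigma> * (2 * p / a) / (1 - \<sigma>)"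
      using True p a d unfolding p_def by (intro divide_right_mono mult_right_mono powr_mono) auto
    also have "\<dots> = 2 powr \<sigma> * (2 * p / (a * (1 - \<sigma>)))" by simp
    also have "\<dots> \<le> 2 powr \<sigma> * (1 + 2 * p / (a * (1 - \<sigma>)))" by (intro mult_left_mono) auto
    also have "\<dots> \<le> 2 powr \<sigma> * max (1 + 2 / a) (1 + 2 * p / (a * (1 - \<sigma>)))"
      by (intro mult_left_mono) auto
    also have "\<dots> = const_A a \<sigma> \<delta>" using True unfolding const_A_def p_def by simp
    finally show ?thesis unfolding H_def p_def .
  next
    case False
    show ?thesis
    proof (cases "\<sigma> = 1")
      case True
      define X where "X = 2 / a"
      define L where "L = ln (2 * p / a)"
      have X2: "X \<ge> 2" using a unfolding X_def by (simp add: le_divide_eq)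
      have p1: "p \<le> 1" using True d p_def by simp
      have pe: "p = 1 - \<delta>" using True p_def by simp
      have hH: "H \<le> 1 + ln (real n)" using H_eq1[OF n(1)] True unfolding H_def by simp
      have "real (Suc n) powr p \<le> real n powr p + p * real n powr (p - 1) * (real (Suc n) - real n)"
        using tan_concave[of p "real n" "real (Suc n)"] p p1 n by simp
      moreover have "real n powr (p - 1) \<le> 1"
      proof -
        have "real n powr (p - 1) \<le> real n powr 0" using n p1 by (intro powr_mono) auto
        thus ?thesis using n by simp
      qed
      moreover have "p * real n powr (p - 1) \<le> p" using p
        by (intro mult_left_le) (auto simp: \<open>real n powr (p - 1) \<le> 1\<close>)
      ultimately have "real (Suc n) powr p \<le> real n powr p + p" by simp
      also have "real n powr p \<le> 2 * p / a" using ntp pe by simp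
      finally have hN: "real (Suc n) powr p \<le> p * (X + 1)" unfolding X_def by (simp add: algebra_simps)
      have lnt: "ln (real n) \<le> ln \<tau>" using n nt by simp
      have tpp: "p * ln \<tau> = L"
      proof -
        have "p * ln \<tau> = ln (\<tau> powr p)" using t1 by (simp add: ln_powr)
        also have "\<tau> powr p = 2 * p / a" using tp pe by simp
        finally show ?thesis unfolding L_def .
      qed
      have L0: "L \<ge> 0"
      proof -
        have "\<tau> powr p \<ge> 1" using t1 p by (simp add: ge_one_powr_ge_zero)
        thus ?thesis unfolding L_def using tp pe by simp
      qed
      have "H * real (Suc n) powr p \<le> (1 + ln \<tau>) * (p * (X + 1))"
        using hH lnt hN H0 by (intro mult_mono) auto
      also have "\<dots> = (X + 1) * (p + p * ln \<tau>)" by (simp add: algebra_simps)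
      also have "\<dots> = (X + 1) * (p + L)" using tpp by simp
      also have "\<dots> \<le> (X + 1) * (1 + L)" using p1 X2 by (intro mult_left_mono) auto
      also have "\<dots> \<le> 2 * max (1 + X) (1 + X * L)"
      proof (cases "L \<le> 1")
        case True
        have "(X + 1) * (1 + L) \<le> (X + 1) * 2" using True X2 by (intro mult_left_mono) auto
        moreover have "(X + 1) * 2 \<le> 2 * max (1 + X) (1 + X * L)"
          using max.cobounded1[of "1 + X" "1 + X * L"] by (smt (verit))
        ultimately show ?thesis by linarith
      next
        case False
        have "0 \<le> (X - 1) * (L - 1)" using False X2 by (intro mult_nonneg_nonneg) auto
        hence "(X + 1) * (1 + L) \<le> 2 * (1 + X * L)" by (simp add: algebra_simps)
        thus ?thesis using max.cobounded2[of "1 + X" "1 + X * L"] by (smt (verit))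
      qed
      also have "\<dots> = const_A a \<sigma> \<delta>" unfolding const_A_def X_def L_def using True pe by simp
      finally show ?thesis unfolding H_def p_def .
    next
      case False2: False
      have s1: "\<sigma> > 1" using False False2 by simp
      have "(\<sigma> - 1) * H \<le> \<sigma>" using H_gt1[OF s1 n(1)] unfolding H_def
        using powr_ge_zero[of "real n" "1 - \<sigma>"] by linarith
      hence hH: "H \<le> \<sigma> / (\<sigma> - 1)" using s1 by (simp add: pos_le_divide_eq mult.commute)
      have tge: "\<tau> \<ge> 2 * p"
      proof -
        have "\<tau> powr (1 - \<delta>) \<le> \<tau> powr 1" using t1 d by (intro powr_mono) auto
        hence "2 * p / a \<le> \<tau>" using tp t1 by simp
        moreover have "2 * p \<le> 2 * p / a" using a p by (simp add: le_divide_eq)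
        ultimately show ?thesis by simp
      qed
      have "real (Suc n) powr p \<le> (\<tau> + 1) powr p" using nt p by (intro powr_mono2) auto
      also have "(\<tau> + 1) = \<tau> * (1 + 1 / \<tau>)" using t1 by (simp add: distrib_left)
      also have "(\<tau> * (1 + 1 / \<tau>)) powr p = \<tau> powr p * (1 + 1 / \<tau>) powr p"
        using t1 by (simp add: powr_mult)
      also have "\<dots> \<le> \<tau> powr p * exp (p * (1 / \<tau>))"
        using one_plus_pow[of p "1/\<tau>"] p t1 by (intro mult_left_mono) auto
      also have "\<dots> \<le> \<tau> powr p * exp (1/2)"
      proof -
        have "p * (1 / \<tau>) = p / \<tau>" by simp
        also have "p / \<tau> \<le> 1/2" using tge t1 by (simp add: pos_divide_le_eq)
        finally have "p * (1 / \<tau>) \<le> 1/2" .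
        thus ?thesis by (intro mult_left_mono) auto
      qed
      finally have hN: "real (Suc n) powr p \<le> \<tau> powr p * exp (1/2)" .
      have "H * real (Suc n) powr p \<le> (\<sigma> / (\<sigma> - 1)) * (\<tau> powr p * exp (1/2))"
        using hH hN H0 by (intro mult_mono) auto
      also have "\<dots> = (\<tau> powr p / (\<sigma> - 1)) * (\<sigma> * exp (1/2))" by (simp add: algebra_simps)
      also have "\<dots> \<le> (\<tau> powr p / (\<sigma> - 1)) * 2 powr \<sigma>"
        using sig_exp_half[OF s] s1 by (intro mult_left_mono) auto
      also have "\<dots> \<le> 2 powr \<sigma> * (1 + 1 / (\<sigma> - 1) * \<tau> powr p)" by (simp add: algebra_simps)
      also have "\<tau> powr p = (2 * p / a) powr (p / (1 - \<delta>))"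
        unfolding \<tau>_def by (simp add: powr_powr)
      also have "2 powr \<sigma> * (1 + 1 / (\<sigma> - 1) * (2 * p / a) powr (p / (1 - \<delta>)))
          \<le> 2 powr \<sigma> * max (1 + 2 / a) (1 + 1 / (\<sigma> - 1) * (2 * p / a) powr (p / (1 - \<delta>)))"
        by (intro mult_left_mono) auto
      also have "\<dots> = const_A a \<sigma> \<delta>"
        using s1 unfolding const_A_def p_def by simp
      finally show ?thesis unfolding H_def p_def .
    qed
  qed
qed



lemma A_ge:
  fixes a \<sigma> \<delta> :: real
  assumes "0 < a" "0 \<le> \<sigma>"
  shows "const_A a \<sigma> \<delta> \<ge> 1 + 2 / a"
proof -
  have g: "\<And>M. 1 + 2 / a \<le> 2 powr \<sigma> * max (1 + 2 / a) M"
  proof -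
    fix M
    have p1: "2 powr \<sigma> \<ge> (1::real)" using assms by (simp add: ge_one_powr_ge_zero)
    have m: "max (1 + 2 / a) M \<ge> 1 + 2 / a" by simp
    have "1 + 2 / a \<le> 1 * max (1 + 2 / a) M" using m by simp
    also have "\<dots> \<le> 2 powr \<sigma> * max (1 + 2 / a) M"
    proof (rule mult_right_mono)
      have "0 < 1 + 2 / a" using assms by (simp add: add_pos_pos)
      thus "0 \<le> max (1 + 2 / a) M" using m by linarith
    qed (use p1 in auto)
    finally show "1 + 2 / a \<le> 2 powr \<sigma> * max (1 + 2 / a) M" .
  qed
  show ?thesis unfolding const_A_def
    by (simp only: split: if_split) (intro conjI impI g)
qed

lemma part1:
  fixes a \<sigma> \<delta> :: real
  assumes s: "\<sigma> > 0" and a: "0 < a" "a \<le> 1" and d: "0 \<le> \<delta>" "\<delta> < min 1 \<sigma>"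
  shows "real t > (2 * (\<sigma> - \<delta>) / a) powr (1 / (1 - \<delta>)) \<longrightarrow>
            weighted_prod_sum a \<sigma> \<delta> t \<le> const_A a \<sigma> \<delta> * real t powr (- (\<sigma> - \<delta>))"
proof (induction t)
  case 0
  then show ?case by simp
next
  case (Suc n)
  have d1: "\<delta> < 1" "\<delta> < \<sigma>" using d by auto
  have Ag: "const_A a \<sigma> \<delta> \<ge> 1 + 2 / a" using A_ge[of a \<sigma> \<delta>] a s by simp
  have aA: "a * const_A a \<sigma> \<delta> \<ge> 2"
  proof -
    have "a * (1 + 2 / a) \<le> a * const_A a \<sigma> \<delta>" using Ag a by (intro mult_left_mono) auto
    moreover have "a * (1 + 2 / a) = a + 2" using a by (simp add: field_simps)
    ultimately show ?thesis using a by simp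
  qed
  have A0: "const_A a \<sigma> \<delta> \<ge> 0" using Ag a by (smt (verit) divide_pos_pos)
  show ?case
  proof
    assume big: "real (Suc n) > (2 * (\<sigma> - \<delta>) / a) powr (1 / (1 - \<delta>))"
    show "weighted_prod_sum a \<sigma> \<delta> (Suc n) \<le> const_A a \<sigma> \<delta> * real (Suc n) powr (- (\<sigma> - \<delta>))"
    proof (cases "n = 0")
      case True
      then show ?thesis using A0 by (simp add: weighted_prod_sum_def)
    next
      case False
      hence n1: "1 \<le> n" by simp
      show ?thesis
      proof (cases "real n > (2 * (\<sigma> - \<delta>) / a) powr (1 / (1 - \<delta>))")
        case True
        show ?thesis by (rule step1[OF a d(1) d1 aA n1 True]) (use Suc.IH True in simp)
      next
        case False
        hence nle: "real n \<le> (2 * (\<sigma> - \<delta>) / a) powr (1 / (1 - \<delta>))" by simp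
        have hb: "(\<Sum>s\<in>{1..<Suc n}. 1 / real s powr \<sigma>) * real (Suc n) powr (\<sigma> - \<delta>) \<le> const_A a \<sigma> \<delta>"
          by (rule Hbound[OF s a d(1) d1 n1 nle])
        have pp: "real (Suc n) powr (\<sigma> - \<delta>) > 0" by simp
        have "(\<Sum>s\<in>{1..<Suc n}. 1 / real s powr \<sigma>) \<le> const_A a \<sigma> \<delta> / real (Suc n) powr (\<sigma> - \<delta>)"
          using hb pp by (simp add: pos_le_divide_eq)
        also have "\<dots> = const_A a \<sigma> \<delta> * real (Suc n) powr (- (\<sigma> - \<delta>))"
          unfolding powr_minus[of "real (Suc n)" "\<sigma> - \<delta>"] by (simp only: divide_inverse)
        finally show ?thesis using S_le_H[OF a d(1), of \<sigma> n] by simp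
      qed
    qed
  qed
qed

theorem lemma6:
  fixes a \<sigma> :: real
  assumes "\<sigma> > 0" and "0 < a" and "a \<le> 1"
  shows "(\<forall>(\<delta>::real) (t::nat). 0 \<le> \<delta> \<and> \<delta> < min 1 \<sigma> \<and>
            real t > (2 * (\<sigma> - \<delta>) / a) powr (1 / (1 - \<delta>)) \<longrightarrow>
            weighted_prod_sum a \<sigma> \<delta> t \<le> const_A a \<sigma> \<delta> * real t powr (- (\<sigma> - \<delta>)))
       \<and> (a - \<sigma> + 1 \<noteq> 0 \<longrightarrow>
            (\<forall>t::nat. t \<ge> 1 \<longrightarrow>
               weighted_prod_sum a \<sigma> 1 t \<le> const_A1 a \<sigma> * real t powr (- min (\<sigma> - 1) a)))"
  using part1[OF assms] part2[OF assms] by blast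


end
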